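(* Let $\Gamma=[\gamma;\zeta;\beta]$ and $\Gamma'=[\gamma;\zeta';\beta]$ be LR-tableaux of the same partition type $(\alpha,\beta,\gamma)$ with entries at most $2$, and let $\Delta,\Delta'$ be arc diagrams of Klein tableaux refining $\Gamma$, $\Gamma'$ respectively. (1) If $\Delta$ is obtained from $\Delta'$ by a single move of type (A) or (B), then $\Gamma=\Gamma'$. (2) If $\Delta$ is obtained from $\Delta'$ by a single move of type (C) or (D), then $\Gamma'\leq_{\rm part}\Gamma$ and $\Gamma\neq\Gamma'$.
   Context: Young diagram conventions: a partition $\lambda$ has columns of lengths $\lambda_1,\lambda_2,\ldots$, rows numbered from the top; $\bar\lambda$ is the conjugate partition. An LR-tableau of type $(\alpha,\beta,\gamma)$ with entries at most $2$ is a filling of the skew diagram $\beta\setminus\gamma$ with $\bar\alpha_1$ entries $1$ and $\bar\alpha_2$ entries $2$, weakly increasing along rows, strictly increasing down columns, and such that for each $c\ge0$ the number of $2$'s in columns to the right of column $c$ is at most the number of $1$'s there. It is encoded as $[\gamma;\zeta;\beta]$ where $\zeta$ is the shape formed by the empty boxes and the boxes $1$. Dominance order on partitions: $\zeta\le\zeta'$ if $\sum_{i=1}^\ell\zeta_i\le\sum_{i=1}^\ell\zeta'_i$ for all $\ell$; then $[\gamma;\zeta;\beta]\leq_{\rm part}[\gamma;\zeta';\beta]$ if $\zeta\le\zeta'$. A Klein tableau is an LR-tableau where each entry $2$ carries a subscript $r$ ($2_r$) such that (a) $1\le r\le m-1$ if it is in row $m$; (b) $r=m-1$ if the box above it contains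 $1$; (c) the number of $2_r$'s is at most the number of $1$'s in row $r$; it refines the LR-tableau obtained by deleting the subscripts. Its arc diagram: an arc $(m,r)$ for each $2_r$ in row $m$, and at each position $r$ as many poles as the number of $1$'s in row $r$ minus the number of arcs ending at $r$. Moves: for $m>n>r>s$, (A) replaces arcs $(m,r),(n,s)$ by $(m,s),(n,r)$; (C) replaces arcs $(m,r),(n,s)$ by $(m,n),(r,s)$; for $m>r>s$, (B) replaces arc $(m,s)$ and pole at $r$ by arc $(m,r)$ and pole at $s$; (D) replaces arc $(m,s)$ and pole at $r$ by pole at $m$ and arc $(r,s)$. *)

theory Defs
  imports Main "HOL-Library.Multiset"
begin

text \<open>Partitions are functions nat => nat; lam i (i >= 1) is the length of column i.
  The value at index 0 is normalised to 0. Boxes are pairs (row m, column i), m, i >= 1.\<close>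

definition is_partition :: "(nat \<Rightarrow> nat) \<Rightarrow> bool" where
  "is_partition lam \<longleftrightarrow> lam 0 = 0 \<and> (\<forall>i j. 1 \<le> i \<longrightarrow> i \<le> j \<longrightarrow> lam j \<le> lam i)
     \<and> finite {i. lam i \<noteq> 0}"

definition conj :: "(nat \<Rightarrow> nat) \<Rightarrow> nat \<Rightarrow> nat" where
  "conj lam k = card {i. 1 \<le> i \<and> k \<le> lam i}"

definition skew :: "(nat \<Rightarrow> nat) \<Rightarrow> (nat \<Rightarrow> nat) \<Rightarrow> (nat \<times> nat) set" where
  "skew lam mu = {(m, i). 1 \<le> i \<and> mu i < m \<and> m \<le> lam i}"

text \<open>In [gamma; zeta; beta] the boxes with entry 1 are zeta \ gamma, those with entry 2 are beta \ zeta.\<close>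
definition ones :: "(nat \<Rightarrow> nat) \<Rightarrow> (nat \<Rightarrow> nat) \<Rightarrow> (nat \<times> nat) set" where
  "ones \<gamma> \<zeta> = skew \<zeta> \<gamma>"

definition twos :: "(nat \<Rightarrow> nat) \<Rightarrow> (nat \<Rightarrow> nat) \<Rightarrow> (nat \<times> nat) set" where
  "twos \<zeta> \<beta> = skew \<beta> \<zeta>"

definition entry :: "(nat \<Rightarrow> nat) \<Rightarrow> (nat \<Rightarrow> nat) \<Rightarrow> nat \<times> nat \<Rightarrow> nat" where
  "entry \<gamma> \<zeta> b = (if b \<in> ones \<gamma> \<zeta> then 1 else 2)"

definition is_LR_tableau ::
  "(nat \<Rightarrow> nat) \<Rightarrow> (nat \<Rightarrow> nat) \<Rightarrow> (nat \<Rightarrow> nat) \<Rightarrow> (nat \<Rightarrow> nat) \<Rightarrow> bool" where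
  "is_LR_tableau \<alpha> \<beta> \<gamma> \<zeta> \<longleftrightarrow>
     is_partition \<alpha> \<and> is_partition \<beta> \<and> is_partition \<gamma> \<and> is_partition \<zeta> \<and>
     (\<forall>i. \<gamma> i \<le> \<zeta> i \<and> \<zeta> i \<le> \<beta> i) \<and>
     (\<forall>m i j. (m, i) \<in> skew \<beta> \<gamma> \<longrightarrow> (m, j) \<in> skew \<beta> \<gamma> \<longrightarrow> i < j
        \<longrightarrow> entry \<gamma> \<zeta> (m, i) \<le> entry \<gamma> \<zeta> (m, j)) \<and>
     (\<forall>m m' i. (m, i) \<in> skew \<beta> \<gamma> \<longrightarrow> (m', i) \<in> skew \<beta> \<gamma> \<longrightarrow> m < m'
        \<longrightarrow> entry \<gamma> \<zeta> (m, i) < entry \<gamma> \<zeta> (m', i)) \<and>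
     card (ones \<gamma> \<zeta>) = conj \<alpha> 1 \<and> card (twos \<zeta> \<beta>) = conj \<alpha> 2 \<and>
     (\<forall>c. card {b \<in> twos \<zeta> \<beta>. snd b > c} \<le> card {b \<in> ones \<gamma> \<zeta>. snd b > c})"

definition ones_in_row :: "(nat \<Rightarrow> nat) \<Rightarrow> (nat \<Rightarrow> nat) \<Rightarrow> nat \<Rightarrow> nat" where
  "ones_in_row \<gamma> \<zeta> r = card {i. (r, i) \<in> ones \<gamma> \<zeta>}"

text \<open>A Klein tableau refining [gamma; zeta; beta]: kappa assigns the subscript to each box with entry 2.\<close>
definition is_Klein_tableau ::
  "(nat \<Rightarrow> nat) \<Rightarrow> (nat \<Rightarrow> nat) \<Rightarrow> (nat \<Rightarrow> nat) \<Rightarrow> (nat \<times> nat \<Rightarrow> nat) \<Rightarrow> bool" where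
  "is_Klein_tableau \<gamma> \<zeta> \<beta> \<kappa> \<longleftrightarrow>
     (\<forall>m i. (m, i) \<in> twos \<zeta> \<beta> \<longrightarrow>
        1 \<le> \<kappa> (m, i) \<and> \<kappa> (m, i) \<le> m - 1 \<and>
        ((m - 1, i) \<in> ones \<gamma> \<zeta> \<longrightarrow> \<kappa> (m, i) = m - 1)) \<and>
     (\<forall>r. card {b \<in> twos \<zeta> \<beta>. \<kappa> b = r} \<le> ones_in_row \<gamma> \<zeta> r)"

type_synonym arc_diagram = "(nat \<times> nat) multiset \<times> nat multiset"

definition arcs_of :: "(nat \<Rightarrow> nat) \<Rightarrow> (nat \<Rightarrow> nat) \<Rightarrow> (nat \<times> nat \<Rightarrow> nat) \<Rightarrow> (nat \<times> nat) multiset" where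
  "arcs_of \<zeta> \<beta> \<kappa> = image_mset (\<lambda>b. (fst b, \<kappa> b)) (mset_set (twos \<zeta> \<beta>))"

text \<open>Arc diagram: an arc (m, r) for each 2_r in row m; at r as many poles as 1s in row r
  minus arcs ending at r.\<close>
definition arc_diagram ::
  "(nat \<Rightarrow> nat) \<Rightarrow> (nat \<Rightarrow> nat) \<Rightarrow> (nat \<Rightarrow> nat) \<Rightarrow> (nat \<times> nat \<Rightarrow> nat) \<Rightarrow> arc_diagram" where
  "arc_diagram \<gamma> \<zeta> \<beta> \<kappa> =
     (arcs_of \<zeta> \<beta> \<kappa>,
      Abs_multiset (\<lambda>r. ones_in_row \<gamma> \<zeta> r - size (filter_mset (\<lambda>a. snd a = r) (arcs_of \<zeta> \<beta> \<kappa>))))"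

text \<open>move_X D' D: D is obtained from D' by a single move of type X.\<close>
definition move_A :: "arc_diagram \<Rightarrow> arc_diagram \<Rightarrow> bool" where
  "move_A D' D \<longleftrightarrow> (\<exists>m n r s. m > n \<and> n > r \<and> r > s \<and>
     {#(m, r), (n, s)#} \<subseteq># fst D' \<and>
     fst D = fst D' - {#(m, r), (n, s)#} + {#(m, s), (n, r)#} \<and> snd D = snd D')"

definition move_C :: "arc_diagram \<Rightarrow> arc_diagram \<Rightarrow> bool" where
  "move_C D' D \<longleftrightarrow> (\<exists>m n r s. m > n \<and> n > r \<and> r > s \<and>
     {#(m, r), (n, s)#} \<subseteq># fst D' \<and>
     fst D = fst D' - {#(m, r), (n, s)#} + {#(m, n), (r, s)#} \<and> snd D = snd D')"

definition move_B :: "arc_diagram \<Rightarrow> arc_diagram \<Rightarrow> bool" where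
  "move_B D' D \<longleftrightarrow> (\<exists>m r s. m > r \<and> r > s \<and>
     (m, s) \<in># fst D' \<and> r \<in># snd D' \<and>
     fst D = fst D' - {#(m, s)#} + {#(m, r)#} \<and> snd D = snd D' - {#r#} + {#s#})"

definition move_D :: "arc_diagram \<Rightarrow> arc_diagram \<Rightarrow> bool" where
  "move_D D' D \<longleftrightarrow> (\<exists>m r s. m > r \<and> r > s \<and>
     (m, s) \<in># fst D' \<and> r \<in># snd D' \<and>
     fst D = fst D' - {#(m, s)#} + {#(r, s)#} \<and> snd D = snd D' - {#r#} + {#m#})"

definition dominated :: "(nat \<Rightarrow> nat) \<Rightarrow> (nat \<Rightarrow> nat) \<Rightarrow> bool" where
  "dominated \<zeta> \<zeta>' \<longleftrightarrow> (\<forall>l. (\<Sum>i = 1..l. \<zeta> i) \<le> (\<Sum>i = 1..l. \<zeta>' i))"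

definition le_part :: "(nat \<Rightarrow> nat) \<times> (nat \<Rightarrow> nat) \<times> (nat \<Rightarrow> nat) \<Rightarrow>
    (nat \<Rightarrow> nat) \<times> (nat \<Rightarrow> nat) \<times> (nat \<Rightarrow> nat) \<Rightarrow> bool" where
  "le_part T T' \<longleftrightarrow> fst T = fst T' \<and> snd (snd T) = snd (snd T') \<and>
     dominated (fst (snd T)) (fst (snd T'))"

end

theory Submission
  imports Defs
begin

lemma part_mono: "is_partition lam \<Longrightarrow> 1 \<le> i \<Longrightarrow> i \<le> j \<Longrightarrow> lam j \<le> lam i"
  unfolding is_partition_def by blast

lemma finite_skew:
  assumes "is_partition lam" shows "finite (skew lam mu)"
proof -
  have "skew lam mu \<subseteq> {..lam 1} \<times> {i. lam i \<noteq> 0}"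
  proof
    fix x assume "x \<in> skew lam mu"
    then obtain a b where x: "x = (a, b)" "1 \<le> b" "mu b < a" "a \<le> lam b" by (auto simp: skew_def)
    have "lam b \<le> lam 1" using part_mono[OF assms, of 1 b] x by simp
    thus "x \<in> {..lam 1} \<times> {i. lam i \<noteq> 0}" using x by auto
  qed
  moreover have "finite {i. lam i \<noteq> 0}" using assms by (simp add: is_partition_def)
  ultimately show ?thesis by (meson finite_SigmaI finite_atMost finite_subset)
qed

lemma finite_colset:
  assumes "is_partition z" "1 \<le> k" shows "finite {j. 1 \<le> j \<and> k \<le> z j}"
proof -
  have "finite {j. z j \<noteq> 0}" using assms by (simp add: is_partition_def)
  moreover have "{j. 1 \<le> j \<and> k \<le> z j} \<subseteq> {j. z j \<noteq> 0}" using assms(2) by auto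
  ultimately show ?thesis by (rule finite_subset[rotated])
qed

lemma dual:
  assumes "is_partition z" "1 \<le> i" "1 \<le> k"
  shows "i \<le> conj z k \<longleftrightarrow> k \<le> z i"
proof
  let ?S = "{j. 1 \<le> j \<and> k \<le> z j}"
  have fin: "finite ?S" by (rule finite_colset[OF assms(1,3)])
  assume "i \<le> conj z k"
  show "k \<le> z i"
  proof (rule ccontr)
    assume "\<not> k \<le> z i"
    have "?S \<subseteq> {1..<i}"
    proof
      fix j assume j: "j \<in> ?S"
      show "j \<in> {1..<i}"
      proof (rule ccontr)
        assume "j \<notin> {1..<i}"
        hence "i \<le> j" using j by auto
        hence "z j \<le> z i" using part_mono[OF assms(1) assms(2)] by blast
        thus False using j \<open>\<not> k \<le> z i\<close> by auto
      qed
    qed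
    hence "card ?S \<le> i - 1" using card_mono[of "{1..<i}" ?S] by simp
    thus False using \<open>i \<le> conj z k\<close> assms(2) by (simp add: conj_def)
  qed
next
  let ?S = "{j. 1 \<le> j \<and> k \<le> z j}"
  have fin: "finite ?S" by (rule finite_colset[OF assms(1,3)])
  assume "k \<le> z i"
  have "{1..i} \<subseteq> ?S"
  proof
    fix j assume "j \<in> {1..i}"
    hence "1 \<le> j" "j \<le> i" by auto
    hence "z i \<le> z j" using part_mono[OF assms(1)] by blast
    thus "j \<in> ?S" using \<open>1 \<le> j\<close> \<open>k \<le> z i\<close> by auto
  qed
  hence "card {1..i} \<le> card ?S" using card_mono[OF fin] by blast
  thus "i \<le> conj z k" by (simp add: conj_def)
qed

lemma col:
  assumes "is_partition z" "1 \<le> i"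
  shows "z i = card {k. 1 \<le> k \<and> i \<le> conj z k}"
proof -
  have "{k. 1 \<le> k \<and> i \<le> conj z k} = {1..z i}" using dual[OF assms] by auto
  thus ?thesis by simp
qed

lemma conj_antimono:
  assumes "is_partition z" "1 \<le> r" "r \<le> n"
  shows "conj z n \<le> conj z r"
  unfolding conj_def
  by (rule card_mono[OF finite_colset[OF assms(1,2)]]) (use assms in auto)

lemma conj_ones:
  assumes "is_partition g" "is_partition z" "\<forall>i. g i \<le> z i" "1 \<le> k"
  shows "conj z k = conj g k + ones_in_row g z k"
proof -
  have eq: "{i. (k, i) \<in> ones g z} = {j. 1 \<le> j \<and> k \<le> z j} - {j. 1 \<le> j \<and> k \<le> g j}"
    by (auto simp: ones_def skew_def)
  have sub: "{j. 1 \<le> j \<and> k \<le> g j} \<subseteq> {j. 1 \<le> j \<and> k \<le> z j}"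
    using assms(3) le_trans by blast
  have fz: "finite {j. 1 \<le> j \<and> k \<le> z j}" by (rule finite_colset[OF assms(2,4)])
  have fg: "finite {j. 1 \<le> j \<and> k \<le> g j}" by (rule finite_colset[OF assms(1,4)])
  show ?thesis unfolding ones_in_row_def eq conj_def
    using card_Diff_subset[OF fg sub] card_mono[OF fz sub] by simp
qed

definition ends :: "arc_diagram \<Rightarrow> nat multiset" where
  "ends D = image_mset snd (fst D) + snd D"

lemma ends_count:
  assumes LR: "is_LR_tableau \<alpha> \<beta> \<gamma> \<zeta>" and K: "is_Klein_tableau \<gamma> \<zeta> \<beta> \<kappa>"
  shows "count (ends (arc_diagram \<gamma> \<zeta> \<beta> \<kappa>)) r = ones_in_row \<gamma> \<zeta> r"
proof -
  have pb: "is_partition \<beta>" and pz: "is_partition \<zeta>" using LR by (auto simp: is_LR_tableau_def)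
  have ft: "finite (twos \<zeta> \<beta>)" unfolding twos_def by (rule finite_skew[OF pb])
  let ?A = "arcs_of \<zeta> \<beta> \<kappa>"
  have N: "\<And>r. size (filter_mset (\<lambda>a. snd a = r) ?A) = card {b \<in> twos \<zeta> \<beta>. \<kappa> b = r}"
    unfolding arcs_of_def using ft by (simp add: filter_mset_image_mset filter_mset_mset_set)
  have C: "\<And>r. count (image_mset snd ?A) r = size (filter_mset (\<lambda>a. snd a = r) ?A)"
    by (simp add: count_conv_size_mset filter_mset_image_mset)
  have le: "\<And>r. size (filter_mset (\<lambda>a. snd a = r) ?A) \<le> ones_in_row \<gamma> \<zeta> r"
    using K N by (simp add: is_Klein_tableau_def)
  let ?F = "\<lambda>r. ones_in_row \<gamma> \<zeta> r - size (filter_mset (\<lambda>a. snd a = r) ?A)"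
  have "{r. 0 < ?F r} \<subseteq> {..\<zeta> 1}"
  proof
    fix r assume "r \<in> {r. 0 < ?F r}"
    hence "ones_in_row \<gamma> \<zeta> r > 0" by simp
    then obtain i where "(r, i) \<in> ones \<gamma> \<zeta>" unfolding ones_in_row_def
      by (metis (mono_tags, lifting) card.empty empty_Collect_eq less_irrefl)
    hence "1 \<le> i" "r \<le> \<zeta> i" by (auto simp: ones_def skew_def)
    thus "r \<in> {..\<zeta> 1}" using part_mono[OF pz, of 1 i] by simp
  qed
  hence fin: "finite {r. 0 < ?F r}" by (rule finite_subset) simp
  show ?thesis
    unfolding ends_def arc_diagram_def using count_Abs_multiset[OF fin] C le[of r] by simp
qed

lemma img_split: "X \<subseteq># M \<Longrightarrow> image_mset f M = image_mset f (M - X) + image_mset f X"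
  by (metis image_mset_union subset_mset.diff_add)
lemma img_split1: "x \<in># M \<Longrightarrow> image_mset f M = image_mset f (M - {#x#}) + {#f x#}"
  using img_split[of "{#x#}" M f] by simp
lemma del_add: "x \<in># M \<Longrightarrow> M = M - {#x#} + {#x#}" by simp

lemma move_ends_AB:
  assumes "move_A D' D \<or> move_B D' D" shows "ends D = ends D'"
  using assms
proof
  assume "move_A D' D"
  then obtain m n r s where X: "{#(m, r), (n, s)#} \<subseteq># fst D'"
    "fst D = fst D' - {#(m, r), (n, s)#} + {#(m, s), (n, r)#}" "snd D = snd D'"
    unfolding move_A_def by blast
  have "image_mset snd (fst D') = image_mset snd (fst D' - {#(m, r), (n, s)#}) + {#r, s#}"
    using img_split[OF X(1), of snd] by simp
  thus ?thesis using X by (simp add: ends_def)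
next
  assume "move_B D' D"
  then obtain m r s where X: "(m, s) \<in># fst D'" "r \<in># snd D'"
    "fst D = fst D' - {#(m, s)#} + {#(m, r)#}" "snd D = snd D' - {#r#} + {#s#}"
    unfolding move_B_def by blast
  obtain Q where Q: "fst D' = add_mset (m, s) Q" using X(1) by (meson multi_member_split)
  obtain P where P: "snd D' = add_mset r P" using X(2) by (meson multi_member_split)
  show ?thesis unfolding ends_def X(3,4) Q P by simp
qed

lemma move_ends_CD:
  assumes "move_C D' D \<or> move_D D' D"
  shows "\<exists>r n. 1 \<le> r \<and> r < n \<and> ends D + {#r#} = ends D' + {#n#}"
  using assms
proof
  assume "move_C D' D"
  then obtain m n r s where X: "m > n" "n > r" "r > s" "{#(m, r), (n, s)#} \<subseteq># fst D'"
    "fst D = fst D' - {#(m, r), (n, s)#} + {#(m, n), (r, s)#}" "snd D = snd D'"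
    unfolding move_C_def by blast
  have a: "image_mset snd (fst D') = image_mset snd (fst D' - {#(m, r), (n, s)#}) + {#r, s#}"
    using img_split[OF X(4), of snd] by simp
  have "ends D + {#r#} = ends D' + {#n#}" unfolding ends_def X(5,6) image_mset_union
    by (subst a) (simp add: ac_simps)
  thus ?thesis using X by (intro exI[of _ r] exI[of _ n]) auto
next
  assume "move_D D' D"
  then obtain m r s where X: "m > r" "r > s" "(m, s) \<in># fst D'" "r \<in># snd D'"
    "fst D = fst D' - {#(m, s)#} + {#(r, s)#}" "snd D = snd D' - {#r#} + {#m#}"
    unfolding move_D_def by blast
  obtain Q where Q: "fst D' = add_mset (m, s) Q" using X(3) by (meson multi_member_split)
  obtain P where P: "snd D' = add_mset r P" using X(4) by (meson multi_member_split)
  have "ends D + {#r#} = ends D' + {#m#}" unfolding ends_def X(5,6) Q P by simp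
  thus ?thesis using X by (intro exI[of _ r] exI[of _ m]) auto
qed

lemma card_ind: "finite A \<Longrightarrow> card {k\<in>A. P k} = (\<Sum>k\<in>A. if P k then 1 else (0::nat))"
  by (simp add: sum.inter_filter[symmetric])

lemma min_sum: "(\<Sum>i=1..l. if i \<le> (c::nat) then 1 else (0::nat)) = min l c"
proof -
  have "{i\<in>{1..l}. i \<le> c} = {1..min l c}" by auto
  thus ?thesis using card_ind[of "{1..l}" "\<lambda>i. i \<le> c"] by simp
qed

lemma colsum:
  assumes "is_partition z" "z 1 \<le> K"
  shows "(\<Sum>i=1..l. z i) = (\<Sum>k=1..K. min l (conj z k))"
proof -
  have "\<And>i. i \<in> {1..l} \<Longrightarrow> z i = (\<Sum>k=1..K. if i \<le> conj z k then 1 else (0::nat))"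
  proof -
    fix i assume "i \<in> {1..l}"
    hence i: "1 \<le> i" by simp
    have "{k. 1 \<le> k \<and> i \<le> conj z k} = {k\<in>{1..K}. i \<le> conj z k}"
    proof -
      have "\<And>k. 1 \<le> k \<Longrightarrow> i \<le> conj z k \<Longrightarrow> k \<le> K"
      proof -
        fix k assume k: "1 \<le> k" "i \<le> conj z k"
        hence "k \<le> z i" using dual[OF assms(1) i k(1)] by simp
        moreover have "z i \<le> z 1" using part_mono[OF assms(1), of 1 i] i by simp
        ultimately show "k \<le> K" using assms(2) by simp
      qed
      thus ?thesis by auto
    qed
    thus "z i = (\<Sum>k=1..K. if i \<le> conj z k then 1 else (0::nat))"
      using col[OF assms(1) i] card_ind[of "{1..K}" "\<lambda>k. i \<le> conj z k"] by simp
  qed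
  hence "(\<Sum>i=1..l. z i) = (\<Sum>i=1..l. \<Sum>k=1..K. if i \<le> conj z k then 1 else (0::nat))"
    by (rule sum.cong[OF refl])
  also have "\<dots> = (\<Sum>k=1..K. \<Sum>i=1..l. if i \<le> conj z k then 1 else (0::nat))"
    by (rule sum.swap)
  also have "\<dots> = (\<Sum>k=1..K. min l (conj z k))" by (rule sum.cong[OF refl], rule min_sum)
  finally show ?thesis .
qed

lemma sum_two:
  assumes "r \<in> A" "n \<in> A" "r \<noteq> n" "finite A"
    "\<And>k. k \<in> A \<Longrightarrow> k \<noteq> r \<Longrightarrow> k \<noteq> n \<Longrightarrow> f k = g k" "f r + f n \<le> g r + (g n :: nat)"
  shows "sum f A \<le> sum g A"
proof -
  have s: "{r, n} \<subseteq> A" using assms by auto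
  have "sum f A = sum f (A - {r, n}) + sum f {r, n}" using sum.subset_diff[OF s assms(4)] by simp
  also have "\<dots> = sum g (A - {r, n}) + (f r + f n)" using assms by (auto intro: sum.cong)
  also have "\<dots> \<le> sum g (A - {r, n}) + (g r + g n)" using assms(6) by simp
  also have "\<dots> = sum g A" using sum.subset_diff[OF s assms(4), of g] assms(3) by simp
  finally show ?thesis .
qed

theorem lemma2p5:
  fixes \<alpha> \<beta> \<gamma> \<zeta> \<zeta>' :: "nat \<Rightarrow> nat" and \<kappa> \<kappa>' :: "nat \<times> nat \<Rightarrow> nat"
  assumes "is_LR_tableau \<alpha> \<beta> \<gamma> \<zeta>" and "is_LR_tableau \<alpha> \<beta> \<gamma> \<zeta>'"
    and "is_Klein_tableau \<gamma> \<zeta> \<beta> \<kappa>" and "is_Klein_tableau \<gamma> \<zeta>' \<beta> \<kappa>'"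
  shows "((move_A (arc_diagram \<gamma> \<zeta>' \<beta> \<kappa>') (arc_diagram \<gamma> \<zeta> \<beta> \<kappa>)
           \<or> move_B (arc_diagram \<gamma> \<zeta>' \<beta> \<kappa>') (arc_diagram \<gamma> \<zeta> \<beta> \<kappa>))
           \<longrightarrow> (\<gamma>, \<zeta>, \<beta>) = (\<gamma>, \<zeta>', \<beta>))
       \<and> ((move_C (arc_diagram \<gamma> \<zeta>' \<beta> \<kappa>') (arc_diagram \<gamma> \<zeta> \<beta> \<kappa>)
           \<or> move_D (arc_diagram \<gamma> \<zeta>' \<beta> \<kappa>') (arc_diagram \<gamma> \<zeta> \<beta> \<kappa>))
           \<longrightarrow> le_part (\<gamma>, \<zeta>', \<beta>) (\<gamma>, \<zeta>, \<beta>) \<and> (\<gamma>, \<zeta>, \<beta>) \<noteq> (\<gamma>, \<zeta>', \<beta>))"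
proof -
  let ?D = "arc_diagram \<gamma> \<zeta> \<beta> \<kappa>" and ?D' = "arc_diagram \<gamma> \<zeta>' \<beta> \<kappa>'"
  have pg: "is_partition \<gamma>" and pz: "is_partition \<zeta>" and pz': "is_partition \<zeta>'"
    and gz: "\<forall>i. \<gamma> i \<le> \<zeta> i" and gz': "\<forall>i. \<gamma> i \<le> \<zeta>' i"
    using assms(1,2) by (auto simp: is_LR_tableau_def)
  have c: "\<And>k. 1 \<le> k \<Longrightarrow> conj \<zeta> k = conj \<gamma> k + count (ends ?D) k"
    using conj_ones[OF pg pz gz] ends_count[OF assms(1,3)] by simp
  have c': "\<And>k. 1 \<le> k \<Longrightarrow> conj \<zeta>' k = conj \<gamma> k + count (ends ?D') k"
    using conj_ones[OF pg pz' gz'] ends_count[OF assms(2,4)] by simp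
  have eqz: "\<zeta> = \<zeta>'" if h: "\<And>k. 1 \<le> k \<Longrightarrow> conj \<zeta> k = conj \<zeta>' k"
  proof
    fix i show "\<zeta> i = \<zeta>' i"
    proof (cases "i = 0")
      case True thus ?thesis using pz pz' by (simp add: is_partition_def)
    next
      case False
      hence i: "1 \<le> i" by simp
      have "{k. 1 \<le> k \<and> i \<le> conj \<zeta> k} = {k. 1 \<le> k \<and> i \<le> conj \<zeta>' k}" using h by auto
      thus ?thesis using col[OF pz i] col[OF pz' i] by simp
    qed
  qed
  have part1: "(move_A ?D' ?D \<or> move_B ?D' ?D) \<longrightarrow> (\<gamma>, \<zeta>, \<beta>) = (\<gamma>, \<zeta>', \<beta>)"
  proof
    assume "move_A ?D' ?D \<or> move_B ?D' ?D"
    hence "ends ?D = ends ?D'" by (rule move_ends_AB)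
    hence "\<zeta> = \<zeta>'" using c c' by (intro eqz) simp
    thus "(\<gamma>, \<zeta>, \<beta>) = (\<gamma>, \<zeta>', \<beta>)" by simp
  qed
  have part2: "(move_C ?D' ?D \<or> move_D ?D' ?D) \<longrightarrow>
      le_part (\<gamma>, \<zeta>', \<beta>) (\<gamma>, \<zeta>, \<beta>) \<and> (\<gamma>, \<zeta>, \<beta>) \<noteq> (\<gamma>, \<zeta>', \<beta>)"
  proof
    assume "move_C ?D' ?D \<or> move_D ?D' ?D"
    then obtain r n where rn: "1 \<le> r" "r < n" "ends ?D + {#r#} = ends ?D' + {#n#}"
      using move_ends_CD by blast
    have cnt: "\<And>k. count (ends ?D) k + (if k = r then 1 else 0) = count (ends ?D') k + (if k = n then 1 else 0)"
    proof -
      fix k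
      have "count (ends ?D + {#r#}) k = count (ends ?D' + {#n#}) k" using rn(3) by simp
      thus "count (ends ?D) k + (if k = r then 1 else 0) = count (ends ?D') k + (if k = n then 1 else 0)"
        by auto
    qed
    have cc: "\<And>k. 1 \<le> k \<Longrightarrow> conj \<zeta> k + (if k = r then 1 else 0) = conj \<zeta>' k + (if k = n then 1 else 0)"
      using c c' cnt by (metis add.assoc)
    have n1: "1 \<le> n" using rn by simp
    have cn: "conj \<zeta> n = conj \<zeta>' n + 1" using cc[OF n1] rn(2) by simp
    have cr: "conj \<zeta> r + 1 = conj \<zeta>' r" using cc[OF rn(1)] rn(2) by simp
    have neq: "\<zeta> \<noteq> \<zeta>'" using cn by auto
    have mono: "conj \<zeta> n \<le> conj \<zeta> r" using conj_antimono[OF pz rn(1)] rn(2) by simp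
    have dom: "dominated \<zeta>' \<zeta>"
      unfolding dominated_def
    proof
      fix l
      let ?K = "\<zeta> 1 + \<zeta>' 1 + n"
      have "(\<Sum>k=1..?K. min l (conj \<zeta>' k)) \<le> (\<Sum>k=1..?K. min l (conj \<zeta> k))"
      proof (rule sum_two[of r _ n])
        show "r \<in> {1..?K}" "n \<in> {1..?K}" "r \<noteq> n" using rn by auto
        show "finite {1..?K}" by simp
        show "\<And>k. k \<in> {1..?K} \<Longrightarrow> k \<noteq> r \<Longrightarrow> k \<noteq> n \<Longrightarrow> min l (conj \<zeta>' k) = min l (conj \<zeta> k)"
          using cc by fastforce
        show "min l (conj \<zeta>' r) + min l (conj \<zeta>' n) \<le> min l (conj \<zeta> r) + min l (conj \<zeta> n)"
          using cn cr mono by (simp add: min_def)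
      qed
      thus "(\<Sum>i=1..l. \<zeta>' i) \<le> (\<Sum>i=1..l. \<zeta> i)"
        using colsum[OF pz, of ?K l] colsum[OF pz', of ?K l] by simp
    qed
    show "le_part (\<gamma>, \<zeta>', \<beta>) (\<gamma>, \<zeta>, \<beta>) \<and> (\<gamma>, \<zeta>, \<beta>) \<noteq> (\<gamma>, \<zeta>', \<beta>)"
      using dom neq by (simp add: le_part_def)
  qed
  show ?thesis using part1 part2 by blast
qed

end
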